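(* Let $A,B \in M_n(\mathbb{R}_+)$ be two triangularizable matrices. If $G_A \subseteq G_B$ or $G_B \subseteq G_A$, then $A$ and $B$ are simultaneously triangularizable.
   Context: Max algebra: $\mathbb{R}_+$ the nonnegative reals with $a\oplus b=\max\{a,b\}$ and ordinary multiplication; for $A,B\in M_n(\mathbb{R}_+)$, $(AB)_{ij}=\max_k a_{ik}b_{kj}$. $GL_n(\mathbb{R}_+)$ is the set of matrices invertible under this product (the generalized permutation matrices). $A$ is triangularizable if $P^{-1}AP$ is upper triangular for some $P\in GL_n(\mathbb{R}_+)$; $A,B$ are simultaneously triangularizable if a single $P\in GL_n(\mathbb{R}_+)$ makes both $P^{-1}AP$ and $P^{-1}BP$ upper triangular. The digraph $G_A$ has vertices $\{1,\dots,n\}$ and an edge $i\to j$ iff $a_{ij}>0$; $G_A\subseteq G_B$ means every edge of $G_A$ is an edge of $G_B$. *)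

theory Defs
  imports Complex_Main
begin

text \<open>n x n matrices over the max algebra R_+, represented as functions
  nat => nat => real; only entries with indices < n are meaningful.\<close>

type_synonym mat = "nat \<Rightarrow> nat \<Rightarrow> real"

definition nonneg_mat :: "nat \<Rightarrow> mat \<Rightarrow> bool" where
  "nonneg_mat n A \<longleftrightarrow> (\<forall>i<n. \<forall>j<n. 0 \<le> A i j)"

definition max_mult :: "nat \<Rightarrow> mat \<Rightarrow> mat \<Rightarrow> mat" where
  "max_mult n A B = (\<lambda>i j. Max ((\<lambda>k. A i k * B k j) ` {..<n}))"

definition max_id :: mat where
  "max_id = (\<lambda>i j. if i = j then 1 else 0)"

definition mat_eq :: "nat \<Rightarrow> mat \<Rightarrow> mat \<Rightarrow> bool" where
  "mat_eq n A B \<longleftrightarrow> (\<forall>i<n. \<forall>j<n. A i j = B i j)"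

definition max_inverse :: "nat \<Rightarrow> mat \<Rightarrow> mat \<Rightarrow> bool" where
  "max_inverse n P Q \<longleftrightarrow> nonneg_mat n P \<and> nonneg_mat n Q \<and>
     mat_eq n (max_mult n P Q) max_id \<and> mat_eq n (max_mult n Q P) max_id"

definition upper_triangular :: "nat \<Rightarrow> mat \<Rightarrow> bool" where
  "upper_triangular n A \<longleftrightarrow> (\<forall>i<n. \<forall>j<n. j < i \<longrightarrow> A i j = 0)"

definition triangularizable :: "nat \<Rightarrow> mat \<Rightarrow> bool" where
  "triangularizable n A \<longleftrightarrow> (\<exists>P Q. max_inverse n P Q \<and>
      upper_triangular n (max_mult n (max_mult n Q A) P))"

definition simult_triangularizable :: "nat \<Rightarrow> mat \<Rightarrow> mat \<Rightarrow> bool" where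
  "simult_triangularizable n A B \<longleftrightarrow> (\<exists>P Q. max_inverse n P Q \<and>
      upper_triangular n (max_mult n (max_mult n Q A) P) \<and>
      upper_triangular n (max_mult n (max_mult n Q B) P))"

definition digraph :: "nat \<Rightarrow> mat \<Rightarrow> (nat \<times> nat) set" where
  "digraph n A = {(i, j). i < n \<and> j < n \<and> 0 < A i j}"

end

theory Submission
  imports Defs
begin

lemma Max_ge_elem:
  assumes "k < (n::nat)" shows "f k \<le> Max (f ` {..<n})"
  using assms by (intro Max_ge) auto

lemma Max_attained:
  assumes "0 < (n::nat)" shows "\<exists>k<n. Max (f ` {..<n}) = f k"
proof -
  have "Max (f ` {..<n}) \<in> f ` {..<n}" using assms by (intro Max_in) auto
  then show ?thesis by auto
qed

lemma zero_pattern: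
  assumes Q: "nonneg_mat n Q" and P: "nonneg_mat n P"
    and A: "nonneg_mat n A" and B: "nonneg_mat n B"
    and sub: "digraph n A \<subseteq> digraph n B"
    and i: "i < n" and j: "j < n"
    and z: "max_mult n (max_mult n Q B) P i j = 0"
  shows "max_mult n (max_mult n Q A) P i j = 0"
proof -
  have n0: "0 < n" using i by simp
  have QBnn: "0 \<le> max_mult n Q B i l" if "l < n" for l
  proof -
    have "Q i 0 * B 0 l \<le> max_mult n Q B i l"
      unfolding max_mult_def using Max_ge_elem[OF n0, of "\<lambda>k. Q k' k * B k l" for k'] by auto
    moreover have "0 \<le> Q i 0 * B 0 l" using Q B i that n0 unfolding nonneg_mat_def by auto
    ultimately show ?thesis by linarith
  qed
  have B0: "Q i k * B k l * P l j = 0" if k: "k < n" and l: "l < n" for k l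
  proof -
    have "Q i k * B k l \<le> max_mult n Q B i l"
      unfolding max_mult_def using Max_ge_elem[OF k, of "\<lambda>k. Q i k * B k l"] by auto
    hence "Q i k * B k l * P l j \<le> max_mult n Q B i l * P l j"
      using P l j unfolding nonneg_mat_def by (intro mult_right_mono) auto
    also have "\<dots> \<le> 0" using z Max_ge_elem[OF l, of "\<lambda>l. max_mult n Q B i l * P l j"]
      unfolding max_mult_def[of n "max_mult n Q B"] by simp
    finally show ?thesis using Q B P i j k l unfolding nonneg_mat_def
      by (meson order.antisym mult_nonneg_nonneg)
  qed
  have A0: "Q i k * A k l * P l j = 0" if k: "k < n" and l: "l < n" for k l
  proof (cases "A k l = 0")
    case True then show ?thesis by simp
  next
    case False
    then have "0 < A k l" using A k l unfolding nonneg_mat_def by force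
    then have "(k,l) \<in> digraph n B" using sub k l unfolding digraph_def by auto
    then have "0 < B k l" unfolding digraph_def by auto
    moreover have "Q i k * B k l * P l j = 0" using B0 k l .
    ultimately have "Q i k * P l j = 0" by simp
    then show ?thesis by (metis mult.commute mult.left_commute mult_zero_left)
  qed
  have zz: "max_mult n Q A i l * P l j = 0" if l: "l < n" for l
  proof -
    obtain k where k: "k < n" and e: "max_mult n Q A i l = Q i k * A k l"
      using Max_attained[OF n0, of "\<lambda>k. Q i k * A k l"] unfolding max_mult_def by auto
    show ?thesis using e A0[OF k l] by simp
  qed
  have "(\<lambda>l. max_mult n Q A i l * P l j) ` {..<n} = {0}"
  proof
    show "(\<lambda>l. max_mult n Q A i l * P l j) ` {..<n} \<subseteq> {0}" using zz by auto
    show "{0} \<subseteq> (\<lambda>l. max_mult n Q A i l * P l j) ` {..<n}"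
      using n0 zz[of 0] by (auto intro!: image_eqI[where x=0])
  qed
  then show ?thesis unfolding max_mult_def[of n "max_mult n Q A"] by simp
qed

lemma transfer_ut:
  assumes "max_inverse n P Q" and "nonneg_mat n A" and "nonneg_mat n B"
    and "digraph n A \<subseteq> digraph n B"
    and "upper_triangular n (max_mult n (max_mult n Q B) P)"
  shows "upper_triangular n (max_mult n (max_mult n Q A) P)"
  using assms zero_pattern[of n Q P A B] unfolding upper_triangular_def max_inverse_def
  by blast

theorem corollary3p4:
  fixes n :: nat and A B :: mat
  assumes "nonneg_mat n A" and "nonneg_mat n B"
    and "triangularizable n A" and "triangularizable n B"
    and "digraph n A \<subseteq> digraph n B \<or> digraph n B \<subseteq> digraph n A"
  shows "simult_triangularizable n A B"
  using assms(5)
proof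
  assume s: "digraph n A \<subseteq> digraph n B"
  obtain P Q where "max_inverse n P Q" "upper_triangular n (max_mult n (max_mult n Q B) P)"
    using assms(4) unfolding triangularizable_def by blast
  then show ?thesis unfolding simult_triangularizable_def
    using transfer_ut[OF _ assms(1,2) s] by blast
next
  assume s: "digraph n B \<subseteq> digraph n A"
  obtain P Q where "max_inverse n P Q" "upper_triangular n (max_mult n (max_mult n Q A) P)"
    using assms(3) unfolding triangularizable_def by blast
  then show ?thesis unfolding simult_triangularizable_def
    using transfer_ut[OF _ assms(2,1) s] by blast
qed

end
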